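(* Let $G$ be the $m\times n$ grid with $m,n\ge 2$, and let $X\subseteq V$ contain $t_1=(1,z_1)$ and $t_2=(m,z_2)$ with $1\le z_1<z_2\le n$. Suppose that for every pair of vertices $(a_1,b_1),(a_2,b_2)$ with $a_1<a_2$, $a_1+b_1=a_2+b_2$ and $z_1\le b_2<b_1\le z_2$, some vertex of $X$ separates $(a_1,b_1)$ and $(a_2,b_2)$. Then $X$ is a landmark set of $G$.
   Context: The $m\times n$ grid $G$ has vertex set $V=\{(i,j):1\le i\le m,\ 1\le j\le n\}$, with $(i_1,j_1),(i_2,j_2)$ adjacent iff $|i_1-i_2|+|j_1-j_2|=1$; thus $d((i_1,j_1),(i_2,j_2))=|i_1-i_2|+|j_1-j_2|$. A vertex $x$ separates $u,v$ if $d(x,u)\neq d(x,v)$. A landmark set is $L\subseteq V$ such that every pair of distinct vertices is separated by some vertex of $L$. *)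

theory Defs
  imports Main
begin

definition grid_V :: "nat \<Rightarrow> nat \<Rightarrow> (nat \<times> nat) set" where
  "grid_V m n = {(i, j). 1 \<le> i \<and> i \<le> m \<and> 1 \<le> j \<and> j \<le> n}"

definition grid_dist :: "nat \<times> nat \<Rightarrow> nat \<times> nat \<Rightarrow> int" where
  "grid_dist u v = \<bar>int (fst u) - int (fst v)\<bar> + \<bar>int (snd u) - int (snd v)\<bar>"

definition separates :: "nat \<times> nat \<Rightarrow> nat \<times> nat \<Rightarrow> nat \<times> nat \<Rightarrow> bool" where
  "separates x u v \<longleftrightarrow> grid_dist x u \<noteq> grid_dist x v"

definition landmark_set :: "nat \<Rightarrow> nat \<Rightarrow> (nat \<times> nat) set \<Rightarrow> bool" where
  "landmark_set m n L \<longleftrightarrow> L \<subseteq> grid_V m n \<and>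
     (\<forall>u\<in>grid_V m n. \<forall>v\<in>grid_V m n. u \<noteq> v \<longrightarrow> (\<exists>x\<in>L. separates x u v))"

end

theory Submission
  imports Defs
begin

lemma key:
  fixes a1 b1 a2 b2 z1 z2 :: nat
  assumes "z1 < z2" "(a1,b1) \<noteq> (a2,b2)"
    "int a1 + \<bar>int b1 - int z1\<bar> = int a2 + \<bar>int b2 - int z1\<bar>"
    "\<bar>int b1 - int z2\<bar> - int a1 = \<bar>int b2 - int z2\<bar> - int a2"
  shows "(a1<a2 \<and> a1+b1=a2+b2 \<and> z1\<le>b2 \<and> b2<b1 \<and> b1\<le>z2)
       \<or> (a2<a1 \<and> a1+b1=a2+b2 \<and> z1\<le>b1 \<and> b1<b2 \<and> b2\<le>z2)
       \<or> (a1<a2 \<and> z2<b1 \<and> b2<z1 \<and> a1+z2=a2+z1 \<and> b1+b2=z1+z2)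
       \<or> (a2<a1 \<and> z2<b2 \<and> b1<z1 \<and> a2+z2=a1+z1 \<and> b1+b2=z1+z2)"
  using assms by (auto simp: abs_if split: if_splits)

lemma transfer:
  fixes p q a1 a2 b1 b2 z1 z2 :: int
  assumes "a1 < a2" "z2 < b1" "a1 + z2 = a2 + z1" "b1 + b2 = z1 + z2" "z1 < z2"
    and "\<bar>p - a1\<bar> + \<bar>q - b1\<bar> = \<bar>p - a2\<bar> + \<bar>q - b2\<bar>"
  shows "\<bar>p - a1\<bar> + \<bar>q - z2\<bar> = \<bar>p - a2\<bar> + \<bar>q - z1\<bar>"
  using assms by (auto simp: abs_if split: if_splits)

theorem mainTheorem11:
  fixes m n z1 z2 :: nat and X :: "(nat \<times> nat) set"
  assumes "m \<ge> 2" and "n \<ge> 2"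
    and "X \<subseteq> grid_V m n"
    and "(1, z1) \<in> X" and "(m, z2) \<in> X"
    and "1 \<le> z1" and "z1 < z2" and "z2 \<le> n"
    and "\<And>a1 b1 a2 b2. (a1, b1) \<in> grid_V m n \<Longrightarrow> (a2, b2) \<in> grid_V m n \<Longrightarrow>
           a1 < a2 \<Longrightarrow> a1 + b1 = a2 + b2 \<Longrightarrow> z1 \<le> b2 \<Longrightarrow> b2 < b1 \<Longrightarrow> b1 \<le> z2 \<Longrightarrow>
           \<exists>x\<in>X. separates x (a1, b1) (a2, b2)"
  shows "landmark_set m n X"
  unfolding landmark_set_def
proof (intro conjI ballI impI)
  show "X \<subseteq> grid_V m n" by fact
  fix u v assume u: "u \<in> grid_V m n" and v: "v \<in> grid_V m n" and uv: "u \<noteq> v"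
  obtain a1 b1 where ue: "u = (a1,b1)" by (cases u)
  obtain a2 b2 where ve: "v = (a2,b2)" by (cases v)
  have sym: "separates x v u \<Longrightarrow> separates x u v" for x
    by (auto simp: separates_def)
  show "\<exists>x\<in>X. separates x u v"
  proof (rule ccontr)
    assume ns: "\<not> (\<exists>x\<in>X. separates x u v)"
    have n1: "\<not> separates (1,z1) u v" using ns assms(4) by blast
    have n2: "\<not> separates (m,z2) u v" using ns assms(5) by blast
    have ga: "1 \<le> a1" "a1 \<le> m" "1 \<le> b1" "b1 \<le> n" using u ue by (auto simp: grid_V_def)
    have gb: "1 \<le> a2" "a2 \<le> m" "1 \<le> b2" "b2 \<le> n" using v ve by (auto simp: grid_V_def)
    have e1: "int a1 + \<bar>int b1 - int z1\<bar> = int a2 + \<bar>int b2 - int z1\<bar>"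
      using n1 ga gb unfolding ue ve separates_def grid_dist_def by simp
    have e2: "\<bar>int b1 - int z2\<bar> - int a1 = \<bar>int b2 - int z2\<bar> - int a2"
      using n2 ga gb unfolding ue ve separates_def grid_dist_def by simp
    from key[OF assms(7) uv[unfolded ue ve] e1 e2] show False
    proof (elim disjE conjE)
      assume "a1<a2" "a1+b1=a2+b2" "z1\<le>b2" "b2<b1" "b1\<le>z2"
      then show False using assms(9)[of a1 b1 a2 b2] u v ue ve ns by auto
    next
      assume "a2<a1" "a1+b1=a2+b2" "z1\<le>b1" "b1<b2" "b2\<le>z2"
      then show False using assms(9)[of a2 b2 a1 b1] u v ue ve ns sym by auto
    next
      assume h: "a1<a2" "z2<b1" "b2<z1" "a1+z2=a2+z1" "b1+b2=z1+z2"
      have "(a1,z2) \<in> grid_V m n" "(a2,z1) \<in> grid_V m n"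
        using ga gb assms(6,7,8) by (auto simp: grid_V_def)
      then obtain x where x: "x \<in> X" "separates x (a1,z2) (a2,z1)"
        using assms(9)[of a1 z2 a2 z1] h assms(7) by auto
      obtain p q where xe: "x = (p,q)" by (cases x)
      have "\<not> separates x u v" using ns x by blast
      hence "\<bar>int p - int a1\<bar> + \<bar>int q - int b1\<bar> = \<bar>int p - int a2\<bar> + \<bar>int q - int b2\<bar>"
        unfolding ue ve xe separates_def grid_dist_def by simp
      from transfer[of "int a1" "int a2" "int z2" "int b1" "int z1" "int b2", OF _ _ _ _ _ this]
      have "\<bar>int p - int a1\<bar> + \<bar>int q - int z2\<bar> = \<bar>int p - int a2\<bar> + \<bar>int q - int z1\<bar>"
        using h assms(7) by linarith
      thus False using x(2) unfolding xe separates_def grid_dist_def by simp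
    next
      assume h: "a2<a1" "z2<b2" "b1<z1" "a2+z2=a1+z1" "b1+b2=z1+z2"
      have "(a2,z2) \<in> grid_V m n" "(a1,z1) \<in> grid_V m n"
        using ga gb assms(6,7,8) by (auto simp: grid_V_def)
      then obtain x where x: "x \<in> X" "separates x (a2,z2) (a1,z1)"
        using assms(9)[of a2 z2 a1 z1] h assms(7) by auto
      obtain p q where xe: "x = (p,q)" by (cases x)
      have "\<not> separates x u v" using ns x by blast
      hence "\<bar>int p - int a2\<bar> + \<bar>int q - int b2\<bar> = \<bar>int p - int a1\<bar> + \<bar>int q - int b1\<bar>"
        unfolding ue ve xe separates_def grid_dist_def by simp
      from transfer[of "int a2" "int a1" "int z2" "int b2" "int z1" "int b1", OF _ _ _ _ _ this]
      have "\<bar>int p - int a2\<bar> + \<bar>int q - int z2\<bar> = \<bar>int p - int a1\<bar> + \<bar>int q - int z1\<bar>"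
        using h assms(7) by linarith
      thus False using x(2) unfolding xe separates_def grid_dist_def by simp
    qed
  qed
qed

end
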